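(* Let $k\geq 0$, let $t_f>0$, and let $E_h$ be a given (piecewise polynomial) approximation of the electrostatic field on $\Omega_x$, with restriction $E_h^i$ to each cell $I_i$. Let $f_h\in\mathcal{C}^1([0,t_f];\mathcal{Z}_h^k)$ satisfy $f_h(0)=\mathcal{P}_h(f_0)$ and $$\sum_{i=1}^{N_x}\sum_{j=1}^{N_v}\mathcal{B}_{ij}(E_h;f_h,\varphi_h)=0\qquad\forall\,\varphi_h\in\mathcal{Z}_h^k,\ \forall t\in[0,t_f],$$ where $$\mathcal{B}_{ij}(E_h;f_h,\varphi_h)=\int_{K_{ij}}\frac{\partial f_h}{\partial t}\varphi_h\,dv\,dx-\int_{K_{ij}}v f_h\frac{\partial\varphi_h}{\partial x}\,dv\,dx+\int_{K_{ij}}E_h^if_h\frac{\partial\varphi_h}{\partial v}\,dv\,dx$$ $$+\int_{J_j}\Big[(\widehat{vf_h}\,\varphi_h^-)_{i+1/2,v}-(\widehat{vf_h}\,\varphi_h^+)_{i-1/2,v}\Big]dv-\int_{I_i}\Big[(\widehat{E_h^if_h}\,\varphi_h^-)_{x,j+1/2}-(\widehat{E_h^if_h}\,\varphi_h^+)_{x,j-1/2}\Big]dx,$$ with the numerical flux $\widehat{vf_h}=\{vf_h\}-\frac{|v|}{2}[f_h]$ (i.e. $vf_h^-$ if $v\ge0$, $vf_h^+$ if $v<0$) and with $\widehat{E_h^if_h}$ given by any one of the following three choices: (A) $\widehat{E_h^if_h}=E_h^if_h^+$ if $P^0(E_h^i)\ge 0$ and $E_h^if_h^-$ if $P^0(E_h^i)<0$;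 (B) $\widehat{E_h^if_h}=E_h^if_h^+$ if $E_h^i>0$ on $I_i$, $E_h^if_h^-$ if $E_h^i<0$ on $I_i$, and $\omega^+E_h^if_h^++\omega^-E_h^if_h^-$ if $E_h^i(x^* )=0$ for some $x^*\in I_i$, where $\omega^+=\frac{|\max_{I_i}E_h|}{|\max_{I_i}E_h|+|\min_{I_i}E_h|}$, $\omega^-=\frac{|\min_{I_i}E_h|}{|\max_{I_i}E_h|+|\min_{I_i}E_h|}$; (C) $\widehat{E_h^if_h}=E_h^if_h^+$ if $E_h^i>0$ on $I_i$, $E_h^if_h^-$ if $E_h^i<0$ on $I_i$, $P^0(E_h^i)f_h^+$ if $P^0(E_h^i)>0$ and $E_h^i$ vanishes somewhere in $I_i$, and $P^0(E_h^i)f_h^-$ if $P^0(E_h^i)<0$ and $E_h^i$ vanishes somewhere in $I_i$; and with boundary fluxes $(\widehat{vf_h})_{1/2,v}=(\widehat{vf_h})_{N_x+1/2,v}$ (periodicity in $x$) and $(\widehat{E_h^if_h})_{x,1/2}=(\widehat{E_h^if_h})_{x,N_v+1/2}=0$. Then for all $t\in[0,t_f]$, $$\sum_{i,j}\int_{K_{ij}}f_h(t)\,dv\,dx=\sum_{i,j}\int_{K_{ij}}f_h(0)\,dv\,dx=\sum_{i,j}\int_{K_{ij}}f_0\,dv\,dx=1.$$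
   Context: Setting: one-dimensional Vlasov–Poisson system on the phase space $\Omega=\Omega_x\times\Omega_v$, $\Omega_x=[0,1]$ (periodic in $x$), $\Omega_v=[-L,L]$. The initial distribution $f_0$ is supported in $\Omega$ and satisfies the charge-neutrality normalization $\int_0^1\int_{\Omega_v}f_0\,dv\,dx=1$. The mesh $\mathcal{T}_h=\{K_{ij}=I_i\times J_j\}$ is a regular Cartesian partition with $I_i=[x_{i-1/2},x_{i+1/2}]$, $i=1,\dots,N_x$, of $\Omega_x$ and $J_j=[v_{j-1/2},v_{j+1/2}]$, $j=1,\dots,N_v$, of $\Omega_v$, with $v=0$ a node of the $v$-partition. $\mathcal{Z}_h^k$ is the space of $L^2(\Omega)$ functions whose restriction to each $K_{ij}$ is a polynomial of degree at most $k$ in each variable. $\mathcal{P}_h$ is the $L^2(\Omega)$-orthogonal projection onto $\mathcal{Z}_h^k$, and $P^0(w)$ on $I_i$ denotes the $L^2(I_i)$-projection onto constants (the cell average). Traces: $(\varphi)^\pm_{i+1/2,v}=\lim_{\varepsilon\downarrow0}\varphi(x_{i+1/2}\pm\varepsilon,v)$ and $(\varphi)^\pm_{x,j+1/2}=\lim_{\varepsilon\downarrow0}\varphi(x,v_{j+1/2}\pm\varepsilon)$; jump $[\varphi]=\varphi^+-\varphi^-$ and average $\{\varphi\}=\frac12(\varphi^++\varphi^-)$. *)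

theory Defs
  imports "HOL-Analysis.Analysis"
begin

(* Coefficient arrays: c i j a b is the coefficient of x^a v^b of the restriction
   to the cell K_ij of an element of Z_h^k (only 1<=i<=Nx, 1<=j<=Nv, a,b<=k matter). *)
type_synonym coef = "nat \<Rightarrow> nat \<Rightarrow> nat \<Rightarrow> nat \<Rightarrow> real"

definition cellpoly :: "nat \<Rightarrow> coef \<Rightarrow> nat \<Rightarrow> nat \<Rightarrow> real \<Rightarrow> real \<Rightarrow> real" where
  "cellpoly k c i j x v = (\<Sum>a\<le>k. \<Sum>b\<le>k. c i j a b * x ^ a * v ^ b)"

(* the cell K_ij = I_i x J_j, with x_{i-1/2} = xs (i-1), x_{i+1/2} = xs i, v_{j-1/2} = vs (j-1), v_{j+1/2} = vs j *)
definition cell :: "(nat \<Rightarrow> real) \<Rightarrow> (nat \<Rightarrow> real) \<Rightarrow> nat \<Rightarrow> nat \<Rightarrow> (real \<times> real) set" where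
  "cell xs vs i j = cbox (xs (i - 1), vs (j - 1)) (xs i, vs j)"

definition cell_avg :: "(nat \<Rightarrow> real) \<Rightarrow> (real \<Rightarrow> real) \<Rightarrow> nat \<Rightarrow> real" where
  "cell_avg xs E i = integral {xs (i - 1)..xs i} E / (xs i - xs (i - 1))"

definition mass :: "nat \<Rightarrow> nat \<Rightarrow> (nat \<Rightarrow> real) \<Rightarrow> (nat \<Rightarrow> real) \<Rightarrow> nat \<Rightarrow> coef \<Rightarrow> real" where
  "mass Nx Nv xs vs k c =
     (\<Sum>i=1..Nx. \<Sum>j=1..Nv. integral (cell xs vs i j) (\<lambda>(x, v). cellpoly k c i j x v))"

(* L^2(Omega)-orthogonal projection onto Z_h^k: p = P_h(g) iff (g - p) is orthogonal to Z_h^k *)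
definition is_L2_proj :: "nat \<Rightarrow> nat \<Rightarrow> (nat \<Rightarrow> real) \<Rightarrow> (nat \<Rightarrow> real) \<Rightarrow> nat
     \<Rightarrow> (real \<times> real \<Rightarrow> real) \<Rightarrow> coef \<Rightarrow> bool" where
  "is_L2_proj Nx Nv xs vs k g p \<longleftrightarrow>
     (\<forall>\<phi>::coef. (\<Sum>i=1..Nx. \<Sum>j=1..Nv.
        integral (cell xs vs i j) (\<lambda>(x, v). (g (x, v) - cellpoly k p i j x v) * cellpoly k \<phi> i j x v)) = 0)"

(* upwind flux hat(v f_h) at the x-edge x_{e+1/2} (e = 0..Nx), v in J_j; periodic: edge 0 = edge Nx.
   f^- comes from the cell to the left, f^+ from the cell to the right. *)
definition vflux :: "nat \<Rightarrow> nat \<Rightarrow> (nat \<Rightarrow> real) \<Rightarrow> coef \<Rightarrow> nat \<Rightarrow> nat \<Rightarrow> real \<Rightarrow> real" where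
  "vflux k Nx xs c e j v =
     (let e' = (if e = 0 then Nx else e);
          r = (if e' = Nx then 1 else e' + 1);
          fm = cellpoly k c e' j (xs e') v;
          fp = cellpoly k c r j (xs (r - 1)) v
      in (v * fp + v * fm) / 2 - \<bar>v\<bar> / 2 * (fp - fm))"

datatype eflux_choice = ChoiceA | ChoiceB | ChoiceC

(* flux hat(E_h^i f_h) at the v-edge v_{j+1/2} (j = 0..Nv), x in I_i; zero at j = 0 and j = Nv.
   E is the restriction E_h^i of E_h to I_i. *)
definition Eflux :: "eflux_choice \<Rightarrow> nat \<Rightarrow> nat \<Rightarrow> (nat \<Rightarrow> real) \<Rightarrow> (nat \<Rightarrow> real)
      \<Rightarrow> (real \<Rightarrow> real) \<Rightarrow> coef \<Rightarrow> nat \<Rightarrow> nat \<Rightarrow> real \<Rightarrow> real" where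
  "Eflux ch k Nv xs vs E c i j x =
     (if j = 0 \<or> Nv \<le> j then 0 else
      (let fm = cellpoly k c i j x (vs j);
           fp = cellpoly k c i (j + 1) x (vs j);
           I = {xs (i - 1)..xs i};
           P = cell_avg xs E i
       in case ch of
         ChoiceA \<Rightarrow> (if P \<ge> 0 then E x * fp else E x * fm)
       | ChoiceB \<Rightarrow>
           (if (\<forall>y\<in>I. E y > 0) then E x * fp
            else if (\<forall>y\<in>I. E y < 0) then E x * fm
            else if (\<exists>y\<in>I. E y = 0) then
              (let M = Sup (E ` I); m = Inf (E ` I);
                   wp = \<bar>M\<bar> / (\<bar>M\<bar> + \<bar>m\<bar>); wm = \<bar>m\<bar> / (\<bar>M\<bar> + \<bar>m\<bar>)
               in wp * E x * fp + wm * E x * fm)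
            else 0)
       | ChoiceC \<Rightarrow>
           (if (\<forall>y\<in>I. E y > 0) then E x * fp
            else if (\<forall>y\<in>I. E y < 0) then E x * fm
            else if (\<exists>y\<in>I. E y = 0) \<and> P \<ge> 0 then P * fp
            else if (\<exists>y\<in>I. E y = 0) \<and> P < 0 then P * fm
            else 0)))"

(* B_ij(E_h; f_h, phi_h); c = f_h(t), ct = d f_h/dt (t), ph = phi_h, E = E_h^i *)
definition Bij :: "eflux_choice \<Rightarrow> nat \<Rightarrow> nat \<Rightarrow> nat \<Rightarrow> (nat \<Rightarrow> real) \<Rightarrow> (nat \<Rightarrow> real)
      \<Rightarrow> (real \<Rightarrow> real) \<Rightarrow> coef \<Rightarrow> coef \<Rightarrow> coef \<Rightarrow> nat \<Rightarrow> nat \<Rightarrow> real" where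
  "Bij ch k Nx Nv xs vs E c ct ph i j =
      integral (cell xs vs i j) (\<lambda>(x, v). cellpoly k ct i j x v * cellpoly k ph i j x v)
    - integral (cell xs vs i j) (\<lambda>(x, v). v * cellpoly k c i j x v * deriv (\<lambda>y. cellpoly k ph i j y v) x)
    + integral (cell xs vs i j) (\<lambda>(x, v). E x * cellpoly k c i j x v * deriv (\<lambda>w. cellpoly k ph i j x w) v)
    + integral {vs (j - 1)..vs j} (\<lambda>v.
          vflux k Nx xs c i j v * cellpoly k ph i j (xs i) v
        - vflux k Nx xs c (i - 1) j v * cellpoly k ph i j (xs (i - 1)) v)
    - integral {xs (i - 1)..xs i} (\<lambda>x.
          Eflux ch k Nv xs vs E c i j x * cellpoly k ph i j x (vs j)
        - Eflux ch k Nv xs vs E c i (j - 1) x * cellpoly k ph i j x (vs (j - 1)))"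

end

theory Submission
  imports Defs
begin


lemma f0_int:
  fixes f0 :: "real \<times> real \<Rightarrow> real"
  assumes "f0 measurable_on cbox a b" "(\<lambda>z. (f0 z)\<^sup>2) integrable_on cbox a b"
  shows "f0 integrable_on cbox a b"
proof (rule measurable_bounded_by_integrable_imp_integrable[where g="\<lambda>z. (f0 z)\<^sup>2 + 1"])
  show "f0 \<in> borel_measurable (lebesgue_on (cbox a b))"
    using assms(1) by (rule measurable_on_imp_borel_measurable_lebesgue) simp
  show "(\<lambda>z. (f0 z)\<^sup>2 + 1) integrable_on cbox a b"
    using assms(2) by (intro integrable_add) auto
  show "norm (f0 x) \<le> (f0 x)\<^sup>2 + 1" for x
  proof -
    have "0 \<le> (\<bar>f0 x\<bar> - 1)^2" by simp
    then have "0 \<le> \<bar>f0 x\<bar>^2 - 2*\<bar>f0 x\<bar> + 1" by (simp add: power2_diff)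
    then show ?thesis using abs_ge_zero[of "f0 x"] by simp
  qed
qed simp

lemma split_v:
  fixes f :: "real \<times> real \<Rightarrow> real"
  assumes "f integrable_on cbox (a,c) (b,d)" "c \<le> m" "m \<le> d"
  shows "integral (cbox (a,c) (b,d)) f = integral (cbox (a,c) (b,m)) f + integral (cbox (a,m) (b,d)) f"
proof -
  have e1: "cbox (a,c) (b,d) \<inter> {z. z \<bullet> (0,1) \<le> m} = cbox (a,c) (b,m)"
    using assms by (auto simp: cbox_Pair_eq inner_prod_def)
  have e2: "cbox (a,c) (b,d) \<inter> {z. m \<le> z \<bullet> (0,1)} = cbox (a,m) (b,d)"
    using assms by (auto simp: cbox_Pair_eq inner_prod_def)
  have s1: "cbox (a,c) (b,m) \<subseteq> cbox (a,c) (b,d)" "cbox (a,m) (b,d) \<subseteq> cbox (a,c) (b,d)"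
    using assms by (auto simp: cbox_Pair_eq)
  have "(f has_integral (integral (cbox (a,c) (b,m)) f + integral (cbox (a,m) (b,d)) f)) (cbox (a,c) (b,d))"
    apply (rule has_integral_split[where k="(0,1)" and c=m])
    unfolding e1 e2 using integrable_on_subcbox[OF assms(1) s1(1)] integrable_on_subcbox[OF assms(1) s1(2)]
    by (auto simp: Basis_prod_def)
  then show ?thesis by (rule integral_unique)
qed

lemma split_x:
  fixes f :: "real \<times> real \<Rightarrow> real"
  assumes "f integrable_on cbox (a,c) (b,d)" "a \<le> m" "m \<le> b"
  shows "integral (cbox (a,c) (b,d)) f = integral (cbox (a,c) (m,d)) f + integral (cbox (m,c) (b,d)) f"
proof -
  have e1: "cbox (a,c) (b,d) \<inter> {z. z \<bullet> (1,0) \<le> m} = cbox (a,c) (m,d)"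
    using assms by (auto simp: cbox_Pair_eq inner_prod_def)
  have e2: "cbox (a,c) (b,d) \<inter> {z. m \<le> z \<bullet> (1,0)} = cbox (m,c) (b,d)"
    using assms by (auto simp: cbox_Pair_eq inner_prod_def)
  have s1: "cbox (a,c) (m,d) \<subseteq> cbox (a,c) (b,d)" "cbox (m,c) (b,d) \<subseteq> cbox (a,c) (b,d)"
    using assms by (auto simp: cbox_Pair_eq)
  have "(f has_integral (integral (cbox (a,c) (m,d)) f + integral (cbox (m,c) (b,d)) f)) (cbox (a,c) (b,d))"
    apply (rule has_integral_split[where k="(1,0)" and c=m])
    unfolding e1 e2 using integrable_on_subcbox[OF assms(1) s1(1)] integrable_on_subcbox[OF assms(1) s1(2)]
    by (auto simp: Basis_prod_def)
  then show ?thesis by (rule integral_unique)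
qed

lemma mono_seq:
  fixes xs :: "nat \<Rightarrow> real"
  assumes "\<forall>i<N. xs i < xs (Suc i)" "m \<le> n" "n \<le> N"
  shows "xs m \<le> xs n"
  using assms(2,3)
proof (induction n)
  case 0 then show ?case by simp
next
  case (Suc n)
  show ?case
  proof (cases "m = Suc n")
    case False
    then have "xs m \<le> xs n" using Suc by simp
    also have "\<dots> \<le> xs (Suc n)" using assms(1) Suc.prems by (simp add: less_imp_le)
    finally show ?thesis .
  qed simp
qed

lemma sum_v:
  fixes f :: "real \<times> real \<Rightarrow> real"
  assumes mono: "\<forall>j<N. vs j < vs (Suc j)" and n: "1 \<le> n" "n \<le> N"
    and int: "f integrable_on cbox (a, vs 0) (b, vs N)"
  shows "integral (cbox (a, vs 0) (b, vs n)) f = (\<Sum>j=1..n. integral (cbox (a, vs (j-1)) (b, vs j)) f)"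
  using n
proof (induction n)
  case 0 then show ?case by simp
next
  case (Suc n)
  show ?case
  proof (cases "n = 0")
    case True then show ?thesis by simp
  next
    case False
    have sub: "cbox (a, vs 0) (b, vs (Suc n)) \<subseteq> cbox (a, vs 0) (b, vs N)"
      using mono_seq[OF mono, of 0 "Suc n"] mono_seq[OF mono, of "Suc n" N] Suc.prems
      by (auto simp: cbox_Pair_eq)
    have "integral (cbox (a, vs 0) (b, vs (Suc n))) f
        = integral (cbox (a, vs 0) (b, vs n)) f + integral (cbox (a, vs n) (b, vs (Suc n))) f"
      apply (rule split_v[OF integrable_on_subcbox[OF int sub]])
      using mono_seq[OF mono, of 0 n] mono_seq[OF mono, of n "Suc n"] Suc.prems by auto
    then show ?thesis using Suc False by simp
  qed
qed

lemma sum_x: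
  fixes f :: "real \<times> real \<Rightarrow> real"
  assumes mono: "\<forall>j<N. xs j < xs (Suc j)" and n: "1 \<le> n" "n \<le> N"
    and int: "f integrable_on cbox (xs 0, c) (xs N, d)"
  shows "integral (cbox (xs 0, c) (xs n, d)) f = (\<Sum>j=1..n. integral (cbox (xs (j-1), c) (xs j, d)) f)"
  using n
proof (induction n)
  case 0 then show ?case by simp
next
  case (Suc n)
  show ?case
  proof (cases "n = 0")
    case True then show ?thesis by simp
  next
    case False
    have sub: "cbox (xs 0, c) (xs (Suc n), d) \<subseteq> cbox (xs 0, c) (xs N, d)"
      using mono_seq[OF mono, of 0 "Suc n"] mono_seq[OF mono, of "Suc n" N] Suc.prems
      by (auto simp: cbox_Pair_eq)
    have "integral (cbox (xs 0, c) (xs (Suc n), d)) f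
        = integral (cbox (xs 0, c) (xs n, d)) f + integral (cbox (xs n, c) (xs (Suc n), d)) f"
      apply (rule split_x[OF integrable_on_subcbox[OF int sub]])
      using mono_seq[OF mono, of 0 n] mono_seq[OF mono, of n "Suc n"] Suc.prems by auto
    then show ?thesis using Suc False by simp
  qed
qed




definition one :: coef where "one = (\<lambda>i j a b. if a = 0 \<and> b = 0 then 1 else 0)"

lemma cellpoly_one: "cellpoly k one i j x v = 1"
proof -
  have h: "(\<Sum>b\<le>k. (if a = 0 \<and> b = 0 then 1 else 0) * x ^ a * v ^ b) = (if a = 0 then 1 else (0::real))" for a
    by (cases "a = 0") (simp_all add: if_distrib if_distribR sum.delta cong: if_cong)
  show ?thesis by (simp add: cellpoly_def one_def h sum.delta)
qed

lemma cell_int: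
  "integral (cbox p q) (\<lambda>(x,v). cellpoly k c i j x v)
   = (\<Sum>a\<le>k. \<Sum>b\<le>k. c i j a b * integral (cbox p q) (\<lambda>z. fst z ^ a * snd z ^ b))"
proof -
  have "(\<lambda>(x,v). cellpoly k c i j x v) = (\<lambda>z. \<Sum>a\<le>k. \<Sum>b\<le>k. c i j a b * (fst z ^ a * snd z ^ b))"
    by (simp add: cellpoly_def fun_eq_iff mult.assoc)
  moreover have cont: "\<And>a b. (\<lambda>z::real\<times>real. fst z ^ a * snd z ^ b) integrable_on cbox p q"
    by (intro integrable_continuous continuous_intros)
  ultimately show ?thesis
    apply simp
    apply (subst integral_sum, simp)
     apply (intro integrable_continuous continuous_intros)
    apply (intro sum.cong refl)
    apply (subst integral_sum, simp)
     apply (intro integrable_continuous continuous_intros)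
    by simp
qed

lemma cellpoly_int: "(\<lambda>(x,v). cellpoly k c i j x v) integrable_on cbox p q"
  unfolding cellpoly_def split_def by (intro integrable_continuous continuous_intros)


lemma cont_if_const:
  "continuous_on S f \<Longrightarrow> continuous_on S g \<Longrightarrow> continuous_on S (\<lambda>x. if P then f x else g x)"
  by (cases P) auto

lemma telescope: fixes n :: nat shows "(\<Sum>i=1..n. G i - G (i - 1)) = G n - (G 0 :: real)"
  by (induction n) auto

lemma vflux_cont: "continuous_on S (\<lambda>v. vflux k Nx xs c e j v)"
  unfolding vflux_def Let_def cellpoly_def
  apply (intro continuous_on_add continuous_on_diff continuous_on_mult continuous_on_id continuous_on_const continuous_on_sum continuous_on_power continuous_on_rabs continuous_on_divide)
  apply simp_all
  done
lemma Eflux_cont: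
  assumes "continuous_on S E"
  shows "continuous_on S (\<lambda>x. Eflux ch k Nv xs vs E c i j x)"
  unfolding Eflux_def Let_def cellpoly_def
  by (cases ch; simp only: eflux_choice.case;
      intro cont_if_const continuous_on_add continuous_on_diff continuous_on_mult continuous_on_id
        continuous_on_const continuous_on_sum continuous_on_power assms)

theorem lemma3p1:
  fixes k Nx Nv :: nat and xs vs :: "nat \<Rightarrow> real" and L tf :: real
    and f0 :: "real \<times> real \<Rightarrow> real"
    and Eh :: "real \<Rightarrow> nat \<Rightarrow> real \<Rightarrow> real"
    and fh fh' :: "real \<Rightarrow> coef"
    and ch :: eflux_choice
  assumes Nx: "Nx \<ge> 1" and Nv: "Nv \<ge> 1"
    and xs0: "xs 0 = 0" and xsN: "xs Nx = 1" and xs_mono: "\<forall>i<Nx. xs i < xs (Suc i)"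
    and vs0: "vs 0 = - L" and vsN: "vs Nv = L" and vs_mono: "\<forall>j<Nv. vs j < vs (Suc j)"
    and v_node: "\<exists>m\<le>Nv. vs m = 0"
    and tf: "tf > 0"
    and f0_supp: "\<forall>z. z \<notin> cbox (0, - L) (1, L) \<longrightarrow> f0 z = 0"
    and f0_L2: "f0 measurable_on cbox (0, - L) (1, L)"
               "(\<lambda>z. (f0 z)\<^sup>2) integrable_on cbox (0, - L) (1, L)"
    and f0_norm: "integral (cbox (0, - L) (1, L)) f0 = 1"
    and Eh_pp: "\<forall>t. \<forall>i\<in>{1..Nx}. \<exists>p. \<forall>x\<in>{xs (i - 1)..xs i}. Eh t i x = poly p x"
    and fh_C1: "\<forall>i\<in>{1..Nx}. \<forall>j\<in>{1..Nv}. \<forall>a\<le>k. \<forall>b\<le>k.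
        (\<forall>t\<in>{0..tf}. ((\<lambda>s. fh s i j a b) has_real_derivative fh' t i j a b) (at t within {0..tf}))
        \<and> continuous_on {0..tf} (\<lambda>t. fh' t i j a b)"
    and fh_init: "is_L2_proj Nx Nv xs vs k f0 (fh 0)"
    and scheme: "\<forall>t\<in>{0..tf}. \<forall>\<phi>::coef.
        (\<Sum>i=1..Nx. \<Sum>j=1..Nv. Bij ch k Nx Nv xs vs (Eh t i) (fh t) (fh' t) \<phi> i j) = 0"
  shows "\<forall>t\<in>{0..tf}.
           mass Nx Nv xs vs k (fh t) = mass Nx Nv xs vs k (fh 0)
         \<and> mass Nx Nv xs vs k (fh 0) = (\<Sum>i=1..Nx. \<Sum>j=1..Nv. integral (cell xs vs i j) f0)
         \<and> (\<Sum>i=1..Nx. \<Sum>j=1..Nv. integral (cell xs vs i j) f0) = 1"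
  proof -
  have cellE: "cell xs vs i j = cbox (xs (i - 1), vs (j - 1)) (xs i, vs j)" for i j
    by (simp add: cell_def)
  \<comment> \<open>reduction of the scheme with test function one\<close>
  have red: "(\<Sum>i=1..Nx. \<Sum>j=1..Nv. integral (cell xs vs i j) (\<lambda>(x,v). cellpoly k (fh' t) i j x v)) = 0"
    if t: "t \<in> {0..tf}" for t
  proof -
    define A where "A i j = integral (cell xs vs i j) (\<lambda>(x,v). cellpoly k (fh' t) i j x v)" for i j
    define G where "G j e = integral {vs (j - 1)..vs j} (\<lambda>v. vflux k Nx xs (fh t) e j v)" for j e
    define H where "H i j = integral {xs (i - 1)..xs i} (\<lambda>x. Eflux ch k Nv xs vs (Eh t i) (fh t) i j x)" for i j
    have Bred: "Bij ch k Nx Nv xs vs (Eh t i) (fh t) (fh' t) one i j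
        = A i j + (G j i - G j (i - 1)) - (H i j - H i (j - 1))" if i: "i \<in> {1..Nx}" for i j
    proof -
      have "integral {vs (j - 1)..vs j} (\<lambda>v. vflux k Nx xs (fh t) i j v - vflux k Nx xs (fh t) (i - 1) j v)
            = G j i - G j (i - 1)"
        unfolding G_def
        by (intro integral_diff integrable_continuous_interval vflux_cont)
      moreover obtain p where p: "\<forall>x\<in>{xs (i - 1)..xs i}. Eh t i x = poly p x"
        using Eh_pp i by blast
      have cE: "continuous_on {xs (i - 1)..xs i} (Eh t i)"
      proof (rule continuous_on_eq)
        show "continuous_on {xs (i - 1)..xs i} (\<lambda>x. poly p x)" by (intro continuous_intros)
        show "poly p x = Eh t i x" if "x \<in> {xs (i - 1)..xs i}" for x using p that by simp
      qed
      have "integral {xs (i - 1)..xs i} (\<lambda>x. Eflux ch k Nv xs vs (Eh t i) (fh t) i j x - Eflux ch k Nv xs vs (Eh t i) (fh t) i (j - 1) x)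
            = H i j - H i (j - 1)"
        unfolding H_def
        by (intro integral_diff integrable_continuous_interval Eflux_cont cE)
      ultimately show ?thesis
        by (simp add: Bij_def cellpoly_one A_def)
    qed
    have "0 = (\<Sum>i=1..Nx. \<Sum>j=1..Nv. Bij ch k Nx Nv xs vs (Eh t i) (fh t) (fh' t) one i j)"
      using scheme t by simp
    also have "\<dots> = (\<Sum>i=1..Nx. \<Sum>j=1..Nv. A i j + (G j i - G j (i - 1)) - (H i j - H i (j - 1)))"
      using Bred by simp
    also have "\<dots> = (\<Sum>i=1..Nx. \<Sum>j=1..Nv. A i j) + (\<Sum>i=1..Nx. \<Sum>j=1..Nv. G j i - G j (i - 1))
                   - (\<Sum>i=1..Nx. \<Sum>j=1..Nv. H i j - H i (j - 1))"
      by (simp only: sum.distrib sum_subtractf)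
    also have "(\<Sum>i=1..Nx. \<Sum>j=1..Nv. G j i - G j (i - 1)) = (\<Sum>j=1..Nv. \<Sum>i=1..Nx. G j i - G j (i - 1))"
      by (rule sum.swap)
    also have "(\<Sum>j=1..Nv. \<Sum>i=1..Nx. G j i - G j (i - 1)) = 0"
    proof -
      have g: "G j Nx = G j 0" for j
        unfolding G_def vflux_def using Nx by simp
      have "(\<Sum>i=1..Nx. G j i - G j (i - 1)) = 0" for j
        using telescope[where G="G j" and n=Nx] g[of j] by simp
      then show ?thesis by simp
    qed
    also have "(\<Sum>i=1..Nx. \<Sum>j=1..Nv. H i j - H i (j - 1)) = 0"
    proof -
      have h: "H i Nv = 0" "H i 0 = 0" for i
        unfolding H_def Eflux_def by simp_all
      have "(\<Sum>j=1..Nv. H i j - H i (j - 1)) = 0" for i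
        using telescope[where G="H i" and n=Nv] h[of i] by simp
      then show ?thesis by simp
    qed
    finally show ?thesis by (simp add: A_def)
  qed
  define M where "M i j a b = integral (cell xs vs i j) (\<lambda>z::real\<times>real. fst z ^ a * snd z ^ b)" for i j a b
  have massE: "mass Nx Nv xs vs k c = (\<Sum>i=1..Nx. \<Sum>j=1..Nv. \<Sum>a\<le>k. \<Sum>b\<le>k. c i j a b * M i j a b)" for c
    unfolding mass_def M_def cell_def by (simp add: cell_int)
  have der: "((\<lambda>s. mass Nx Nv xs vs k (fh s)) has_field_derivative 0) (at t within {0..tf})"
    if t: "t \<in> {0..tf}" for t
  proof -
    have "((\<lambda>s. mass Nx Nv xs vs k (fh s)) has_field_derivative
            (\<Sum>i=1..Nx. \<Sum>j=1..Nv. \<Sum>a\<le>k. \<Sum>b\<le>k. fh' t i j a b * M i j a b)) (at t within {0..tf})"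
      unfolding massE
      apply (intro DERIV_sum DERIV_cmult_right)
      using fh_C1 t by auto
    moreover have "(\<Sum>i=1..Nx. \<Sum>j=1..Nv. \<Sum>a\<le>k. \<Sum>b\<le>k. fh' t i j a b * M i j a b) = 0"
      using red[OF t] unfolding M_def cell_def by (simp add: cell_int)
    ultimately show ?thesis by simp
  qed
  obtain C where C: "\<forall>t\<in>{0..tf}. mass Nx Nv xs vs k (fh t) = C"
    using has_field_derivative_zero_constant[of "{0..tf}" "\<lambda>s. mass Nx Nv xs vs k (fh s)"] der
    by auto
  have cons: "mass Nx Nv xs vs k (fh t) = mass Nx Nv xs vs k (fh 0)" if "t \<in> {0..tf}" for t
    using C that tf by auto
  have f0i: "f0 integrable_on cbox (0, - L) (1, L)"
    using f0_int f0_L2 by blast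
  have xm: "xs m \<le> xs n" if "m \<le> n" "n \<le> Nx" for m n
    using mono_seq[OF xs_mono that] .
  have vm: "vs m \<le> vs n" if "m \<le> n" "n \<le> Nv" for m n
    using mono_seq[OF vs_mono that] .
  have big: "cbox (0, - L) (1, L) = cbox (xs 0, vs 0) (xs Nx, vs Nv)"
    using xs0 xsN vs0 vsN by simp
  have sub: "cbox (xs (i - 1), vs (j - 1)) (xs i, vs j) \<subseteq> cbox (0, - L) (1, L)"
    if "i \<in> {1..Nx}" "j \<in> {1..Nv}" for i j
  proof -
    have "xs 0 \<le> xs (i - 1)" "xs (i - 1) \<le> xs i" "xs i \<le> xs Nx"
         "vs 0 \<le> vs (j - 1)" "vs (j - 1) \<le> vs j" "vs j \<le> vs Nv"
      using that xm vm by auto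
    then show ?thesis unfolding big by (auto simp: cbox_Pair_eq)
  qed
  have m0: "mass Nx Nv xs vs k (fh 0) = (\<Sum>i=1..Nx. \<Sum>j=1..Nv. integral (cell xs vs i j) f0)"
  proof -
    have "0 = (\<Sum>i=1..Nx. \<Sum>j=1..Nv.
        integral (cell xs vs i j) (\<lambda>(x, v). (f0 (x, v) - cellpoly k (fh 0) i j x v) * cellpoly k one i j x v))"
      using fh_init unfolding is_L2_proj_def by simp
    also have "\<dots> = (\<Sum>i=1..Nx. \<Sum>j=1..Nv. integral (cell xs vs i j) f0
                  - integral (cell xs vs i j) (\<lambda>(x, v). cellpoly k (fh 0) i j x v))"
    proof (intro sum.cong refl)
      fix i j assume ij: "i \<in> {1..Nx}" "j \<in> {1..Nv}"
      have eq: "(\<lambda>(x, v). (f0 (x, v) - cellpoly k (fh 0) i j x v) * cellpoly k one i j x v)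
          = (\<lambda>z. f0 z - (\<lambda>(x, v). cellpoly k (fh 0) i j x v) z)"
        by (auto simp: cellpoly_one fun_eq_iff)
      show "integral (cell xs vs i j) (\<lambda>(x, v). (f0 (x, v) - cellpoly k (fh 0) i j x v) * cellpoly k one i j x v)
          = integral (cell xs vs i j) f0 - integral (cell xs vs i j) (\<lambda>(x, v). cellpoly k (fh 0) i j x v)"
        unfolding eq cellE
        by (intro integral_diff integrable_on_subcbox[OF f0i sub[OF ij]] cellpoly_int)
    qed
    finally show ?thesis
      unfolding mass_def by (simp add: sum_subtractf)
  qed
  have m1: "(\<Sum>i=1..Nx. \<Sum>j=1..Nv. integral (cell xs vs i j) f0) = 1"
  proof -
    have "(\<Sum>i=1..Nx. \<Sum>j=1..Nv. integral (cell xs vs i j) f0)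
        = (\<Sum>i=1..Nx. integral (cbox (xs (i - 1), vs 0) (xs i, vs Nv)) f0)"
    proof (intro sum.cong refl)
      fix i assume i: "i \<in> {1..Nx}"
      have "cbox (xs (i - 1), vs 0) (xs i, vs Nv) \<subseteq> cbox (0, - L) (1, L)"
      proof -
        have "xs 0 \<le> xs (i - 1)" "xs (i - 1) \<le> xs i" "xs i \<le> xs Nx" "vs 0 \<le> vs Nv"
          using i xm vm Nv by auto
        then show ?thesis unfolding big by (auto simp: cbox_Pair_eq)
      qed
      then show "(\<Sum>j=1..Nv. integral (cell xs vs i j) f0) = integral (cbox (xs (i - 1), vs 0) (xs i, vs Nv)) f0"
        unfolding cellE
        using sum_v[OF vs_mono Nv order.refl integrable_on_subcbox[OF f0i]] by simp
    qed
    also have "\<dots> = integral (cbox (xs 0, vs 0) (xs Nx, vs Nv)) f0"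
      using sum_x[OF xs_mono Nx order.refl, of f0 "vs 0" "vs Nv"] f0i big by simp
    also have "\<dots> = 1" using f0_norm big by simp
    finally show ?thesis .
  qed
  show ?thesis using cons m0 m1 by simp
qed

end
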